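(* Let $q=3^m$ with $m\ge1$ and $f(x)=x^{q+2}$ on $\mathbb{F}_{q^2}$. Then $$\sum_{a\in\mathbb{F}_{q^2},\,b\in\mathbb{F}_{q^2}^*}\big(W_f(a,b)-1\big)^3=q^2(q^2-1)(q^3-3q^2+2).$$
   Context: The Walsh transform is $W_f(a,b)=\sum_{x\in\mathbb{F}_{q^2}}\xi_3^{\mathrm{Tr}_{\mathbb{F}_{q^2}/\mathbb{F}_3}(bf(x)-ax)}$ with $\xi_3=e^{2\pi i/3}$ and $\mathrm{Tr}_{\mathbb{F}_{q^2}/\mathbb{F}_3}$ the absolute trace. *)

theory Defs
  imports Complex_Main
begin

text \<open>The finite field F_{3^n} is modelled by a finite field type 'a with CARD('a) = 3^n
  (this determines the field up to isomorphism).  The absolute trace to F_3 is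
  Tr(x) = x + x^3 + ... + x^(3^(n-1)); its values lie in the prime field {0,1,2}.\<close>

definition abs_trace3 :: "nat \<Rightarrow> 'a::field \<Rightarrow> 'a" where
  "abs_trace3 n x = (\<Sum>i<n. x ^ (3 ^ i))"

definition xi3 :: complex where
  "xi3 = exp (2 * pi * \<i> / 3)"

definition xi3_pow :: "'a::field \<Rightarrow> complex" where
  "xi3_pow t = xi3 ^ (THE k. k < 3 \<and> of_nat k = t)"

definition walsh :: "nat \<Rightarrow> ('a::{field,finite} \<Rightarrow> 'a) \<Rightarrow> 'a \<Rightarrow> 'a \<Rightarrow> complex" where
  "walsh n f a b = (\<Sum>x\<in>UNIV. xi3_pow (abs_trace3 n (b * f x - a * x)))"

end

theory Submission
  imports Defs "HOL-Computational_Algebra.Polynomial"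
begin

lemma card_of_nat_zero:
  "of_nat (card (UNIV::'a::{finite,comm_ring_1} set)) = (0::'a)"
proof -
  have "(\<Sum>x\<in>UNIV. x + 1) = (\<Sum>x\<in>(UNIV::'a set). x)"
  proof -
    have "bij (\<lambda>x::'a. x + 1)"
      by (rule bij_betw_byWitness[where f'="\<lambda>x. x - 1"]) auto
    then show ?thesis
      using sum.reindex_bij_betw[of "\<lambda>x::'a. x + 1" UNIV UNIV "\<lambda>x. x"] by simp
  qed
  then have "(\<Sum>x\<in>(UNIV::'a set). x) + of_nat (card (UNIV::'a set)) = (\<Sum>x\<in>(UNIV::'a set). x)"
    by (simp add: sum.distrib)
  then show ?thesis by simp
qed

lemma char3:
  assumes "card (UNIV::'a::{field,finite} set) = 3 ^ n"
  shows "(3::'a) = 0"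
proof -
  have "(3::'a) ^ n = 0" using card_of_nat_zero[where 'a='a] assms by simp
  then show ?thesis by simp
qed

lemma pow_card:
  fixes x :: "'a::{field,finite}"
  shows "x ^ card (UNIV::'a set) = x"
proof (cases "x = 0")
  case True then show ?thesis by (simp add: finite_UNIV_card_ge_0)
next
  case False
  let ?S = "UNIV - {0::'a}"
  have bij: "bij_betw (\<lambda>y. x * y) ?S ?S"
    by (rule bij_betw_byWitness[where f'="\<lambda>y. y / x"]) (use False in auto)
  have "(\<Prod>y\<in>?S. x * y) = (\<Prod>y\<in>?S. y)"
    using prod.reindex_bij_betw[OF bij, of "\<lambda>y. y"] by simp
  moreover have "(\<Prod>y\<in>?S. x * y) = x ^ card ?S * (\<Prod>y\<in>?S. y)"
    by (simp add: prod.distrib)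
  moreover have "(\<Prod>y\<in>?S. y) \<noteq> 0" by simp
  ultimately have "x ^ card ?S = 1" by simp
  moreover have "card ?S = card (UNIV::'a set) - 1" by (simp add: card_Diff_singleton)
  moreover have "card (UNIV::'a set) \<ge> 1" using finite_UNIV_card_ge_0[where 'a='a] by simp
  ultimately have "x ^ (card (UNIV::'a set) - 1) = 1" by simp
  moreover have "card (UNIV::'a set) = Suc (card (UNIV::'a set) - 1)"
    using \<open>card (UNIV::'a set) \<ge> 1\<close> by simp
  ultimately show ?thesis by (metis mult_1_right power_Suc)
qed

lemma frob3:
  fixes x y :: "'a::field"
  assumes "(3::'a) = 0"
  shows "(x + y) ^ 3 = x ^ 3 + y ^ 3"
proof -
  have "(x + y) ^ 3 = x ^ 3 + y ^ 3 + 3 * (x * x * y + x * y * y)"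
    by (simp add: power3_eq_cube algebra_simps)
  then show ?thesis using assms by simp
qed

lemma frob_pow:
  fixes x y :: "'a::field"
  assumes "(3::'a) = 0"
  shows "(x + y) ^ (3 ^ k) = x ^ (3 ^ k) + y ^ (3 ^ k)"
proof (induction k)
  case 0 then show ?case by simp
next
  case (Suc k)
  have "(x + y) ^ (3 ^ Suc k) = ((x + y) ^ (3 ^ k)) ^ 3"
    by (simp add: power_mult[symmetric] mult.commute)
  also have "\<dots> = (x ^ (3 ^ k)) ^ 3 + (y ^ (3 ^ k)) ^ 3"
    using Suc frob3[OF assms] by simp
  also have "\<dots> = x ^ (3 ^ Suc k) + y ^ (3 ^ Suc k)"
    by (simp add: power_mult[symmetric] mult.commute)
  finally show ?case .
qed

lemma frob_neg:
  fixes x :: "'a::field"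
  shows "(- x) ^ (3 ^ k) = - (x ^ (3 ^ k))"
  by (simp add: power_minus_odd)

lemma frob_diff:
  fixes x y :: "'a::field"
  assumes "(3::'a) = 0"
  shows "(x - y) ^ (3 ^ k) = x ^ (3 ^ k) - y ^ (3 ^ k)"
  using frob_pow[OF assms, of x "- y" k] frob_neg[of y k] by simp

lemma frob_sum:
  fixes a :: "'b \<Rightarrow> 'a::field"
  assumes "(3::'a) = 0"
  shows "(\<Sum>i\<in>A. a i) ^ 3 = (\<Sum>i\<in>A. a i ^ 3)"
proof (induction A rule: infinite_finite_induct)
  case (infinite A) then show ?case by simp
next
  case empty then show ?case by simp
next
  case (insert x F) then show ?case by (simp add: frob3[OF assms])
qed

lemma tr_add:
  fixes x y :: "'a::field"
  assumes "(3::'a) = 0"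
  shows "abs_trace3 n (x + y) = abs_trace3 n x + abs_trace3 n y"
  unfolding abs_trace3_def by (simp add: frob_pow[OF assms] sum.distrib)

lemma tr_zero: "abs_trace3 n (0::'a::field) = 0"
  unfolding abs_trace3_def by (intro sum.neutral) simp

lemma tr_cube:
  fixes x :: "'a::{field,finite}"
  assumes "card (UNIV::'a set) = 3 ^ n"
  shows "abs_trace3 n x ^ 3 = abs_trace3 n x"
proof -
  have c3: "(3::'a) = 0" by (rule char3[OF assms])
  let ?g = "\<lambda>i. x ^ (3 ^ i)"
  have "abs_trace3 n x ^ 3 = (\<Sum>i<n. ?g i ^ 3)"
    unfolding abs_trace3_def by (rule frob_sum[OF c3])
  also have "\<dots> = (\<Sum>i<n. ?g (Suc i))"
    by (simp add: power_mult[symmetric] mult.commute)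
  finally have 1: "abs_trace3 n x ^ 3 = (\<Sum>i<n. ?g (Suc i))" .
  have 2: "(\<Sum>i<Suc n. ?g i) = ?g 0 + (\<Sum>i<n. ?g (Suc i))"
    by (rule sum.lessThan_Suc_shift)
  have 3: "(\<Sum>i<Suc n. ?g i) = (\<Sum>i<n. ?g i) + ?g n"
    by simp
  have "?g n = x" using pow_card[of x] assms by simp
  then show ?thesis using 1 2 3 unfolding abs_trace3_def by simp
qed

lemma tr_vals:
  fixes x :: "'a::{field,finite}"
  assumes "card (UNIV::'a set) = 3 ^ n"
  shows "\<exists>k. abs_trace3 n x = of_nat k"
proof -
  have c3: "(3::'a) = 0" by (rule char3[OF assms])
  let ?t = "abs_trace3 n x"
  have "?t * (?t - 1) * (?t + 1) = ?t ^ 3 - ?t"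
    by (simp add: power3_eq_cube algebra_simps)
  then have "?t * (?t - 1) * (?t + 1) = 0" using tr_cube[OF assms] by simp
  then have "?t = 0 \<or> ?t = 1 \<or> ?t = -1" by (auto simp: eq_neg_iff_add_eq_0)
  moreover have "(-1::'a) = of_nat 2"
  proof -
    have "(of_nat 2::'a) + 1 = 3" by simp
    then show ?thesis using c3 by (metis add_eq_0_iff2)
  qed
  ultimately show ?thesis by (metis of_nat_0 of_nat_1)
qed

lemma xi3_cube: "xi3 ^ 3 = 1"
proof -
  have "xi3 ^ 3 = exp (of_nat 3 * (2 * pi * \<i> / 3))"
    unfolding xi3_def by (rule exp_of_nat_mult[symmetric])
  also have "\<dots> = exp (2 * of_real pi * \<i>)" by (simp add: mult.commute mult.left_commute)
  also have "\<dots> = 1" by (rule exp_two_pi_i)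
  finally show ?thesis .
qed

lemma xi3_pow_mod: "xi3 ^ k = xi3 ^ (k mod 3)"
proof -
  have "xi3 ^ k = xi3 ^ (3 * (k div 3)) * xi3 ^ (k mod 3)" by (simp only: power_add[symmetric] mult_div_mod_eq)
  moreover have "xi3 ^ (3 * (k div 3)) = 1" by (simp add: power_mult xi3_cube)
  ultimately show ?thesis by simp
qed

lemma of_nat_mod3:
  assumes "(3::'a::field) = 0"
  shows "(of_nat k :: 'a) = of_nat (k mod 3)"
proof -
  have "(of_nat k :: 'a) = of_nat (3 * (k div 3)) + of_nat (k mod 3)" by (simp only: of_nat_add[symmetric] mult_div_mod_eq)
  moreover have "(of_nat (3 * (k div 3)) :: 'a) = 0" using assms by simp
  ultimately show ?thesis by simp
qed

lemma small_inj:
  assumes "(3::'a::field) = 0" "i < 3" "j < 3" "(of_nat i :: 'a) = of_nat j"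
  shows "i = j"
proof -
  have n1: "(1::'a) \<noteq> 0" by simp
  have n2: "(2::'a) \<noteq> 0"
  proof
    assume "(2::'a) = 0"
    have e: "(3::'a) = 2 + 1" by simp
    have "(3::'a) = 0 + 1" using e \<open>(2::'a) = 0\<close> by (simp only:)
    then show False using assms(1) by simp
  qed
  have n21: "(2::'a) \<noteq> 1"
  proof
    assume "(2::'a) = 1"
    have e: "(3::'a) = 2 + 1" by simp
    have "(3::'a) = 1 + 1" using e \<open>(2::'a) = 1\<close> by (simp only:)
    then show False using assms(1) n2 by simp
  qed
  have "i \<in> {0,1,2}" "j \<in> {0,1,2}" using assms(2,3) by auto
  then show ?thesis using assms(4) n1 n2 n21 by auto
qed

lemma xi3_pow_of_nat:
  assumes "(3::'a::field) = 0"
  shows "xi3_pow (of_nat k :: 'a) = xi3 ^ k"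
proof -
  have "(THE j. j < 3 \<and> (of_nat j :: 'a) = of_nat k) = k mod 3"
  proof (rule the_equality)
    show "k mod 3 < 3 \<and> (of_nat (k mod 3) :: 'a) = of_nat k"
      using of_nat_mod3[OF assms, of k] by simp
  next
    fix j assume "j < 3 \<and> (of_nat j :: 'a) = of_nat k"
    then show "j = k mod 3"
      using small_inj[OF assms, of j "k mod 3"] of_nat_mod3[OF assms, of k] by simp
  qed
  then show ?thesis unfolding xi3_pow_def using xi3_pow_mod by simp
qed


lemma xi3_ne1: "xi3 \<noteq> 1"
proof
  assume "xi3 = 1"
  then have "Re xi3 = 1" by simp
  moreover have "Re xi3 = cos (2 * pi / 3)"
    unfolding xi3_def by (simp add: Re_exp)
  ultimately show False by (simp add: cos_120)
qed

lemma xi3_sq_ne1: "xi3 ^ 2 \<noteq> 1"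
proof
  assume "xi3 ^ 2 = 1"
  then have "xi3 ^ 3 = xi3" by (metis power_Suc2 mult_1 numeral_2_eq_2 numeral_3_eq_3 mult.commute)
  then show False using xi3_cube xi3_ne1 by simp
qed

definition psi :: "nat \<Rightarrow> 'a::{field,finite} \<Rightarrow> complex" where
  "psi n x = xi3_pow (abs_trace3 n x)"

lemma psi_add:
  fixes x y :: "'a::{field,finite}"
  assumes "card (UNIV::'a set) = 3 ^ n"
  shows "psi n (x + y) = psi n x * psi n y"
proof -
  have c3: "(3::'a) = 0" by (rule char3[OF assms])
  obtain j where j: "abs_trace3 n x = of_nat j" using tr_vals[OF assms] by blast
  obtain k where k: "abs_trace3 n y = of_nat k" using tr_vals[OF assms] by blast
  have "abs_trace3 n (x + y) = of_nat (j + k)" using tr_add[OF c3] j k by simp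
  then have "psi n (x + y) = xi3 ^ (j + k)" unfolding psi_def using xi3_pow_of_nat[OF c3] by metis
  moreover have "psi n x = xi3 ^ j" unfolding psi_def using j xi3_pow_of_nat[OF c3] by metis
  moreover have "psi n y = xi3 ^ k" unfolding psi_def using k xi3_pow_of_nat[OF c3] by metis
  ultimately show ?thesis by (simp add: power_add)
qed

lemma psi_zero:
  assumes "card (UNIV::'a::{field,finite} set) = 3 ^ n"
  shows "psi n (0::'a) = 1"
  unfolding psi_def tr_zero using xi3_pow_of_nat[OF char3[OF assms], of 0] by simp


lemma tr_nontriv:
  assumes "card (UNIV::'a::{field,finite} set) = 3 ^ n" "n \<ge> 1"
  shows "\<exists>d::'a. abs_trace3 n d \<noteq> 0"
proof (rule ccontr)
  assume "\<not> ?thesis"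
  then have all0: "\<forall>d::'a. abs_trace3 n d = 0" by simp
  define P :: "'a poly" where "P = (\<Sum>i<n. monom 1 (3 ^ i))"
  have polyP: "poly P x = abs_trace3 n x" for x
    unfolding P_def abs_trace3_def by (simp add: poly_sum poly_monom)
  have "coeff P (3 ^ (n - 1)) = (\<Sum>i<n. if i = n - 1 then 1 else 0)"
    unfolding P_def by (simp add: coeff_sum coeff_monom)
  also have "\<dots> = 1" using assms(2) by simp
  finally have cP: "coeff P (3 ^ (n - 1)) = 1" .
  then have "P \<noteq> 0" by auto
  have "degree P \<le> 3 ^ (n - 1)"
    unfolding P_def
  proof (rule degree_sum_le)
    fix i assume "i \<in> {..<n}"
    then have "(3::nat) ^ i \<le> 3 ^ (n - 1)" by (intro power_increasing) auto
    then show "degree (monom (1::'a) (3 ^ i)) \<le> 3 ^ (n - 1)"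
      using degree_monom_le[of "1::'a" "3 ^ i"] by linarith
  qed simp
  moreover have "card {x. poly P x = 0} \<le> degree P"
    by (rule card_poly_roots_bound[OF \<open>P \<noteq> 0\<close>])
  moreover have "{x. poly P x = 0} = UNIV" using all0 polyP by auto
  ultimately have "card (UNIV::'a set) \<le> 3 ^ (n - 1)" by simp
  moreover have "(3::nat) ^ (n - 1) < 3 ^ n" using assms(2) by (intro power_strict_increasing) auto
  ultimately show False using assms(1) by linarith
qed

lemma psi_nontriv:
  assumes "card (UNIV::'a::{field,finite} set) = 3 ^ n" "n \<ge> 1"
  shows "\<exists>d::'a. psi n d \<noteq> 1"
proof -
  have c3: "(3::'a) = 0" by (rule char3[OF assms(1)])
  obtain d :: 'a where d: "abs_trace3 n d \<noteq> 0" using tr_nontriv[OF assms] by blast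
  obtain k where k: "abs_trace3 n d = of_nat k" using tr_vals[OF assms(1)] by blast
  have "(of_nat (k mod 3) :: 'a) \<noteq> 0" using d k of_nat_mod3[OF c3, of k] by simp
  then have "k mod 3 \<noteq> 0" by (metis of_nat_0)
  then have "k mod 3 = 1 \<or> k mod 3 = 2" by auto
  moreover have "psi n d = xi3 ^ (k mod 3)"
    unfolding psi_def k xi3_pow_of_nat[OF c3] by (rule xi3_pow_mod)
  ultimately have "psi n d \<noteq> 1" using xi3_ne1 xi3_sq_ne1 by auto
  then show ?thesis by blast
qed

lemma char_sum:
  assumes "card (UNIV::'a::{field,finite} set) = 3 ^ n" "n \<ge> 1"
  shows "(\<Sum>x\<in>UNIV. psi n (c * x)) = (if c = (0::'a) then of_nat (card (UNIV::'a set)) else 0)"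
proof (cases "c = 0")
  case True
  then show ?thesis using psi_zero[OF assms(1)] by simp
next
  case False
  have bij: "bij_betw (\<lambda>x. c * x) (UNIV::'a set) UNIV"
    by (rule bij_betw_byWitness[where f'="\<lambda>y. y / c"]) (use False in auto)
  have 1: "(\<Sum>x\<in>UNIV. psi n (c * x)) = (\<Sum>x\<in>(UNIV::'a set). psi n x)"
    using sum.reindex_bij_betw[OF bij, of "\<lambda>x::'a. psi n x"] by simp
  obtain d :: 'a where d: "psi n d \<noteq> 1" using psi_nontriv[OF assms] by blast
  have bij2: "bij_betw (\<lambda>x. x + d) (UNIV::'a set) UNIV"
    by (rule bij_betw_byWitness[where f'="\<lambda>y. y - d"]) auto
  have "(\<Sum>x\<in>(UNIV::'a set). psi n x) = (\<Sum>x\<in>UNIV. psi n (x + d))"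
    using sum.reindex_bij_betw[OF bij2, of "\<lambda>x::'a. psi n x"] by simp
  also have "\<dots> = (\<Sum>x\<in>(UNIV::'a set). psi n x) * psi n d"
    by (simp add: psi_add[OF assms(1)] sum_distrib_right)
  finally have "(\<Sum>x\<in>(UNIV::'a set). psi n x) * (psi n d - 1) = 0" by (simp add: algebra_simps)
  then have "(\<Sum>x\<in>(UNIV::'a set). psi n x) = 0" using d by simp
  then show ?thesis using 1 False by simp
qed


lemma fiber_card:
  fixes \<phi> :: "'a::{finite,ab_group_add} \<Rightarrow> 'b::ab_group_add"
  assumes add: "\<And>x y. \<phi> (x + y) = \<phi> x + \<phi> y"
  shows "card (UNIV::'a set) = card (range \<phi>) * card {x. \<phi> x = 0}"
proof -
  have sub: "\<phi> (x - y) = \<phi> x - \<phi> y" for x y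
    using add[of y "x - y"] by (simp add: algebra_simps)
  have fib: "card {x. \<phi> x = \<phi> x0} = card {x. \<phi> x = 0}" for x0
  proof -
    have "{x. \<phi> x = \<phi> x0} = (\<lambda>k. x0 + k) ` {x. \<phi> x = 0}"
    proof (rule set_eqI, rule iffI)
      fix x assume "x \<in> {x. \<phi> x = \<phi> x0}"
      then have "x - x0 \<in> {x. \<phi> x = 0}" by (simp add: sub)
      then show "x \<in> (\<lambda>k. x0 + k) ` {x. \<phi> x = 0}" by (rule rev_image_eqI) simp
    next
      fix x assume "x \<in> (\<lambda>k. x0 + k) ` {x. \<phi> x = 0}"
      then show "x \<in> {x. \<phi> x = \<phi> x0}" by (auto simp: add)
    qed
    moreover have "inj (\<lambda>k. x0 + k)" by (rule injI) simp
    ultimately show ?thesis by (simp add: card_image inj_on_def)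
  qed
  have "card (UNIV::'a set) = (\<Sum>x\<in>(UNIV::'a set). 1)" by simp
  also have "\<dots> = (\<Sum>y\<in>range \<phi>. \<Sum>x\<in>{x. x \<in> UNIV \<and> \<phi> x = y}. 1)"
    by (rule sum.group[symmetric]) auto
  also have "\<dots> = (\<Sum>y\<in>range \<phi>. card {x. \<phi> x = 0})"
  proof (rule sum.cong)
    fix y assume "y \<in> range \<phi>"
    then obtain x0 where "y = \<phi> x0" by blast
    then show "(\<Sum>x\<in>{x. x \<in> UNIV \<and> \<phi> x = y}. 1) = card {x. \<phi> x = 0}"
      using fib[of x0] by simp
  qed simp
  also have "\<dots> = card (range \<phi>) * card {x. \<phi> x = 0}" by simp
  finally show ?thesis .
qed

lemma roots_bound_q:
  fixes c :: "'a::field"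
  assumes "q \<ge> 2"
  shows "card {x::'a. x ^ q + c * x = 0} \<le> q"
proof -
  define P :: "'a poly" where "P = monom 1 q + [:0, c:]"
  have polyP: "poly P x = x ^ q + c * x" for x
    unfolding P_def by (simp add: poly_monom algebra_simps)
  have "coeff P q = 1" unfolding P_def using assms by (simp add: coeff_monom coeff_pCons split: nat.split)
  then have "P \<noteq> 0" by auto
  have "degree P \<le> q" unfolding P_def
    by (rule degree_add_le) (use assms in \<open>auto intro: degree_monom_le order.trans[OF degree_pCons_le]\<close>)
  moreover have "card {x. poly P x = 0} \<le> degree P"
    by (rule card_poly_roots_bound[OF \<open>P \<noteq> 0\<close>])
  ultimately show ?thesis using polyP by simp
qed

lemma kernel_card:
  assumes "card (UNIV::'a::{field,finite} set) = 3 ^ (2 * m)" "m \<ge> 1"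
  shows "card {t::'a. t ^ (3 ^ m) = t} = 3 ^ m"
proof -
  let ?q = "3 ^ m :: nat"
  have c3: "(3::'a) = 0" by (rule char3[OF assms(1)])
  have "(3::nat) ^ 1 \<le> 3 ^ m" by (rule power_increasing) (use assms(2) in auto)
  then have q2: "?q \<ge> 2" by simp
  define \<phi> :: "'a \<Rightarrow> 'a" where "\<phi> x = x ^ ?q - x" for x
  have add: "\<phi> (x + y) = \<phi> x + \<phi> y" for x y
    unfolding \<phi>_def by (simp add: frob_pow[OF c3])
  have main: "card (UNIV::'a set) = card (range \<phi>) * card {x. \<phi> x = 0}"
    by (rule fiber_card[OF add])
  have "{x. \<phi> x = 0} = {x::'a. x ^ ?q + (-1) * x = 0}" unfolding \<phi>_def by simp
  then have k: "card {x. \<phi> x = 0} \<le> ?q" using roots_bound_q[OF q2, of "-1::'a"] by simp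
  have "range \<phi> \<subseteq> {y::'a. y ^ ?q + 1 * y = 0}"
  proof
    fix y assume "y \<in> range \<phi>"
    then obtain x where y: "y = \<phi> x" by blast
    have qq: "?q * ?q = card (UNIV::'a set)" using assms(1) by (simp add: power_add[symmetric] mult_2)
    have "x ^ (?q * ?q) = x" unfolding qq by (rule pow_card)
    then have "y ^ ?q = x - x ^ ?q" unfolding y \<phi>_def frob_diff[OF c3] by (simp add: power_mult[symmetric])
    then show "y \<in> {y::'a. y ^ ?q + 1 * y = 0}" using y unfolding \<phi>_def by simp
  qed
  then have r: "card (range \<phi>) \<le> ?q"
    using roots_bound_q[OF q2, of "1::'a"] card_mono[of "{y::'a. y ^ ?q + 1 * y = 0}" "range \<phi>"] by simp
  have "?q * ?q = card (range \<phi>) * card {x. \<phi> x = 0}" using main assms(1) by (simp add: power_add[symmetric] mult_2)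
  moreover have "card (range \<phi>) * card {x. \<phi> x = 0} \<le> ?q * card {x. \<phi> x = 0}" using r by simp
  ultimately have "?q * ?q \<le> ?q * card {x. \<phi> x = 0}" by simp
  then have "?q \<le> card {x. \<phi> x = 0}" by simp
  with k have "card {x. \<phi> x = 0} = ?q" by simp
  moreover have "{x. \<phi> x = 0} = {t::'a. t ^ ?q = t}" unfolding \<phi>_def by simp
  ultimately show ?thesis by simp
qed


lemma row_card:
  assumes "card (UNIV::'a::{field,finite} set) = 3 ^ (2 * m)" "m \<ge> 1"
  shows "card {x::'a. x ^ (3 ^ m) * y = x * y ^ (3 ^ m)} = (if y = 0 then card (UNIV::'a set) else 3 ^ m)"
proof (cases "y = 0")
  case True
  then show ?thesis by simp
next
  case False
  let ?q = "3 ^ m :: nat"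
  have "{x::'a. x ^ ?q * y = x * y ^ ?q} = (\<lambda>t. t * y) ` {t. t ^ ?q = t}"
  proof (rule set_eqI, rule iffI)
    fix x assume "x \<in> {x::'a. x ^ ?q * y = x * y ^ ?q}"
    then have e: "x ^ ?q * y = x * y ^ ?q" by simp
    have "y ^ ?q \<noteq> 0" using False by simp
    then have "(x / y) ^ ?q = x / y" using e False by (simp add: power_divide frac_eq_eq)
    moreover have "x = (x / y) * y" using False by simp
    ultimately show "x \<in> (\<lambda>t. t * y) ` {t. t ^ ?q = t}" by blast
  next
    fix x assume "x \<in> (\<lambda>t. t * y) ` {t. t ^ ?q = t}"
    then obtain t where "x = t * y" "t ^ ?q = t" by blast
    then show "x \<in> {x::'a. x ^ ?q * y = x * y ^ ?q}" by (simp add: power_mult_distrib algebra_simps)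
  qed
  moreover have "inj (\<lambda>t. t * y)" using False by (auto intro: injI)
  ultimately have "card {x::'a. x ^ ?q * y = x * y ^ ?q} = card {t::'a. t ^ ?q = t}"
    by (simp add: card_image inj_on_def)
  then show ?thesis using kernel_card[OF assms] False by simp
qed

lemma g_identity:
  fixes x y :: "'a::field"
  assumes c3: "(3::'a) = 0"
  shows "x ^ (3 ^ m + 2) + y ^ (3 ^ m + 2) + (- (x + y)) ^ (3 ^ m + 2)
         = (x - y) * (x ^ (3 ^ m) * y - x * y ^ (3 ^ m))"
proof -
  let ?q = "3 ^ m :: nat"
  have odd: "odd (?q + 2)" by simp
  have "(- (x + y)) ^ (?q + 2) = - ((x + y) ^ (?q + 2))" using odd by (rule power_minus_odd)
  also have "(x + y) ^ (?q + 2) = (x ^ ?q + y ^ ?q) * (x + y) ^ 2"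
    by (simp add: power_add frob_pow[OF c3] power2_eq_square)
  finally have 1: "(- (x + y)) ^ (?q + 2) = - ((x ^ ?q + y ^ ?q) * (x + y) ^ 2)" .
  define X where "X = x ^ ?q"
  define Y where "Y = y ^ ?q"
  have "x ^ (?q + 2) + y ^ (?q + 2) + (- (x + y)) ^ (?q + 2)
        = X * x ^ 2 + Y * y ^ 2 - (X + Y) * (x + y) ^ 2"
    unfolding 1 X_def Y_def by (simp add: power_add power2_eq_square algebra_simps)
  also have "\<dots> = (x - y) * (X * y - x * Y) + 3 * (- (X * x * y + x * y * Y))"
    by (simp add: power2_eq_square algebra_simps)
  also have "\<dots> = (x - y) * (X * y - x * Y)" using c3 by simp
  finally show ?thesis unfolding X_def Y_def .
qed

lemma g_zero_iff:
  fixes x y :: "'a::field"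
  assumes c3: "(3::'a) = 0"
  shows "(x ^ (3 ^ m + 2) + y ^ (3 ^ m + 2) + (- (x + y)) ^ (3 ^ m + 2) = 0)
         \<longleftrightarrow> x ^ (3 ^ m) * y = x * y ^ (3 ^ m)"
  unfolding g_identity[OF c3] by (auto simp: mult.commute)


lemma swap3:
  "(\<Sum>a\<in>A. \<Sum>x\<in>B. \<Sum>y\<in>C. F a x y) = (\<Sum>x\<in>B. \<Sum>y\<in>C. \<Sum>a\<in>A. F a x y)"
proof -
  have "(\<Sum>a\<in>A. \<Sum>x\<in>B. \<Sum>y\<in>C. F a x y) = (\<Sum>x\<in>B. \<Sum>a\<in>A. \<Sum>y\<in>C. F a x y)"
    by (rule sum.swap)
  also have "\<dots> = (\<Sum>x\<in>B. \<Sum>y\<in>C. \<Sum>a\<in>A. F a x y)"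
    by (rule sum.cong[OF refl], rule sum.swap)
  finally show ?thesis .
qed

lemma swap4:
  "(\<Sum>a\<in>A. \<Sum>x\<in>B. \<Sum>y\<in>C. \<Sum>z\<in>D. F a x y z) = (\<Sum>x\<in>B. \<Sum>y\<in>C. \<Sum>z\<in>D. \<Sum>a\<in>A. F a x y z)"
proof -
  have "(\<Sum>a\<in>A. \<Sum>x\<in>B. \<Sum>y\<in>C. \<Sum>z\<in>D. F a x y z) = (\<Sum>x\<in>B. \<Sum>y\<in>C. \<Sum>a\<in>A. \<Sum>z\<in>D. F a x y z)"
    by (rule swap3)
  also have "\<dots> = (\<Sum>x\<in>B. \<Sum>y\<in>C. \<Sum>z\<in>D. \<Sum>a\<in>A. F a x y z)"
    by (rule sum.cong[OF refl], rule sum.cong[OF refl], rule sum.swap)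
  finally show ?thesis .
qed

lemma walsh_psi:
  assumes "card (UNIV::'a::{field,finite} set) = 3 ^ n"
  shows "walsh n f a b = (\<Sum>x\<in>(UNIV::'a set). psi n (b * f x) * psi n ((- x) * a))"
proof -
  have "psi n (b * f x - a * x) = psi n (b * f x) * psi n ((- x) * a)" for x
  proof -
    have "b * f x - a * x = b * f x + (- x) * a" by (simp add: algebra_simps)
    then show ?thesis by (simp only: psi_add[OF assms])
  qed
  then show ?thesis unfolding walsh_def psi_def[symmetric] by simp
qed

lemma neg_sum_zero2: "(- (x + y) = (0::'a::ab_group_add)) = (y = - x)"
  by (metis add.commute add_eq_0_iff neg_equal_0_iff_equal)

lemma neg_sum_zero3: "(- (x + y + z) = (0::'a::ab_group_add)) = (z = - (x + y))"
  by (metis add.commute add_eq_0_iff neg_equal_0_iff_equal)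

lemma sumW1:
  assumes card: "card (UNIV::'a::{field,finite} set) = 3 ^ n" and "n \<ge> 1" and f0: "f 0 = 0"
  shows "(\<Sum>a\<in>(UNIV::'a set). walsh n f a b) = of_nat (card (UNIV::'a set))"
proof -
  let ?N = "of_nat (card (UNIV::'a set)) :: complex"
  have "(\<Sum>a\<in>(UNIV::'a set). walsh n f a b)
      = (\<Sum>a\<in>(UNIV::'a set). \<Sum>x\<in>UNIV. psi n (b * f x) * psi n ((- x) * a))"
    by (simp add: walsh_psi[OF card])
  also have "\<dots> = (\<Sum>x\<in>UNIV. \<Sum>a\<in>(UNIV::'a set). psi n (b * f x) * psi n ((- x) * a))"
    by (rule sum.swap)
  also have "\<dots> = (\<Sum>x\<in>UNIV. psi n (b * f x) * (if - x = 0 then ?N else 0))"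
    by (simp only: sum_distrib_left[symmetric] char_sum[OF card \<open>n \<ge> 1\<close>])
  also have "\<dots> = (\<Sum>x\<in>UNIV. if x = 0 then psi n (b * f x) * ?N else 0)"
    by (rule sum.cong) auto
  also have "\<dots> = ?N" by (simp add: f0 psi_zero[OF card])
  finally show ?thesis .
qed

lemma sumW2:
  assumes card: "card (UNIV::'a::{field,finite} set) = 3 ^ n" and "n \<ge> 1" and odd: "\<And>x. f (- x) = - f x"
  shows "(\<Sum>a\<in>(UNIV::'a set). walsh n f a b ^ 2) = of_nat (card (UNIV::'a set)) ^ 2"
proof -
  let ?N = "of_nat (card (UNIV::'a set)) :: complex"
  have e: "psi n (b * f x) * psi n ((- x) * a) * (psi n (b * f y) * psi n ((- y) * a))
         = psi n (b * (f x + f y)) * psi n ((- (x + y)) * a)" for x y a :: 'a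
  proof -
    have 1: "psi n (b * (f x + f y)) = psi n (b * f x) * psi n (b * f y)"
      by (simp add: distrib_left psi_add[OF card])
    have "(- (x + y)) * a = (- x) * a + (- y) * a" by (simp add: algebra_simps)
    then have 2: "psi n ((- (x + y)) * a) = psi n ((- x) * a) * psi n ((- y) * a)"
      by (simp only: psi_add[OF card])
    show ?thesis unfolding 1 2 by (simp add: ac_simps)
  qed
  have "(\<Sum>a\<in>(UNIV::'a set). walsh n f a b ^ 2)
      = (\<Sum>a\<in>(UNIV::'a set). \<Sum>x\<in>UNIV. \<Sum>y\<in>UNIV. psi n (b * (f x + f y)) * psi n ((- (x + y)) * a))"
    unfolding walsh_psi[OF card] power2_eq_square sum_product by (simp only: e)
  also have "\<dots> = (\<Sum>x\<in>UNIV. \<Sum>y\<in>UNIV. \<Sum>a\<in>(UNIV::'a set). psi n (b * (f x + f y)) * psi n ((- (x + y)) * a))"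
    by (rule swap3)
  also have "\<dots> = (\<Sum>x\<in>(UNIV::'a set). \<Sum>y\<in>UNIV. psi n (b * (f x + f y)) * (if - (x + y) = 0 then ?N else 0))"
    by (simp only: sum_distrib_left[symmetric] char_sum[OF card \<open>n \<ge> 1\<close>])
  also have "\<dots> = (\<Sum>x\<in>(UNIV::'a set). \<Sum>y\<in>UNIV. if y = - x then psi n (b * (f x + f y)) * ?N else 0)"
    by (intro sum.cong refl) (auto simp: neg_sum_zero2)
  also have "\<dots> = (\<Sum>x\<in>(UNIV::'a set). ?N)"
    by (simp add: odd psi_zero[OF card])
  also have "\<dots> = ?N ^ 2" by (simp add: power2_eq_square)
  finally show ?thesis .
qed

lemma cube_sum:
  fixes u :: "'b \<Rightarrow> 'c::comm_ring_1"
  shows "(\<Sum>x\<in>A. u x) ^ 3 = (\<Sum>x\<in>A. \<Sum>y\<in>A. \<Sum>z\<in>A. u x * (u y * u z))"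
proof -
  have "(\<Sum>x\<in>A. u x) ^ 3 = (\<Sum>x\<in>A. u x) * ((\<Sum>y\<in>A. u y) * (\<Sum>z\<in>A. u z))"
    by (simp add: power3_eq_cube)
  also have "\<dots> = (\<Sum>x\<in>A. u x) * (\<Sum>y\<in>A. \<Sum>z\<in>A. u y * u z)"
    by (simp only: sum_product)
  also have "\<dots> = (\<Sum>x\<in>A. u x * (\<Sum>y\<in>A. \<Sum>z\<in>A. u y * u z))"
    by (rule sum_distrib_right)
  also have "\<dots> = (\<Sum>x\<in>A. \<Sum>y\<in>A. \<Sum>z\<in>A. u x * (u y * u z))"
    by (simp only: sum_distrib_left)
  finally show ?thesis .
qed

lemma sumW3:
  assumes card: "card (UNIV::'a::{field,finite} set) = 3 ^ n" and "n \<ge> 1"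
  shows "(\<Sum>a\<in>(UNIV::'a set). walsh n f a b ^ 3)
       = of_nat (card (UNIV::'a set)) * (\<Sum>x\<in>(UNIV::'a set). \<Sum>y\<in>UNIV. psi n (b * (f x + f y + f (- (x + y)))))"
proof -
  let ?N = "of_nat (card (UNIV::'a set)) :: complex"
  have e: "psi n (b * f x) * psi n ((- x) * a) * (psi n (b * f y) * psi n ((- y) * a) * (psi n (b * f z) * psi n ((- z) * a)))
         = psi n (b * (f x + f y + f z)) * psi n ((- (x + y + z)) * a)" for x y z a :: 'a
  proof -
    have 1: "psi n (b * (f x + f y + f z)) = psi n (b * f x) * psi n (b * f y) * psi n (b * f z)"
      by (simp add: distrib_left psi_add[OF card])
    have "(- (x + y + z)) * a = (- x) * a + (- y) * a + (- z) * a" by (simp add: algebra_simps)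
    then have 2: "psi n ((- (x + y + z)) * a) = psi n ((- x) * a) * psi n ((- y) * a) * psi n ((- z) * a)"
      by (simp only: psi_add[OF card])
    show ?thesis unfolding 1 2 by (simp add: ac_simps)
  qed
  have "(\<Sum>a\<in>(UNIV::'a set). walsh n f a b ^ 3)
      = (\<Sum>a\<in>(UNIV::'a set). \<Sum>x\<in>UNIV. \<Sum>y\<in>UNIV. \<Sum>z\<in>UNIV. psi n (b * (f x + f y + f z)) * psi n ((- (x + y + z)) * a))"
    unfolding walsh_psi[OF card] cube_sum by (simp only: e)
  also have "\<dots> = (\<Sum>x\<in>UNIV. \<Sum>y\<in>UNIV. \<Sum>z\<in>UNIV. \<Sum>a\<in>(UNIV::'a set). psi n (b * (f x + f y + f z)) * psi n ((- (x + y + z)) * a))"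
    by (rule swap4)
  also have "\<dots> = (\<Sum>x\<in>(UNIV::'a set). \<Sum>y\<in>UNIV. \<Sum>z\<in>UNIV. psi n (b * (f x + f y + f z)) * (if - (x + y + z) = 0 then ?N else 0))"
    by (simp only: sum_distrib_left[symmetric] char_sum[OF card \<open>n \<ge> 1\<close>])
  also have "\<dots> = (\<Sum>x\<in>(UNIV::'a set). \<Sum>y\<in>UNIV. \<Sum>z\<in>UNIV. if z = - (x + y) then psi n (b * (f x + f y + f z)) * ?N else 0)"
    by (intro sum.cong refl) (auto simp: neg_sum_zero3)
  also have "\<dots> = (\<Sum>x\<in>(UNIV::'a set). \<Sum>y\<in>UNIV. psi n (b * (f x + f y + f (- (x + y)))) * ?N)"
    by simp
  also have "\<dots> = ?N * (\<Sum>x\<in>(UNIV::'a set). \<Sum>y\<in>UNIV. psi n (b * (f x + f y + f (- (x + y)))))"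
    by (simp add: sum_distrib_left sum_distrib_right mult.commute)
  finally show ?thesis .
qed

lemma W0:
  assumes card: "card (UNIV::'a::{field,finite} set) = 3 ^ n" and "n \<ge> 1"
  shows "walsh n f a (0::'a) = (if a = 0 then of_nat (card (UNIV::'a set)) else 0)"
proof -
  have "walsh n f a 0 = (\<Sum>x\<in>(UNIV::'a set). psi n ((- a) * x))"
    unfolding walsh_def psi_def by simp
  then show ?thesis by (simp only: char_sum[OF card \<open>n \<ge> 1\<close>] neg_equal_0_iff_equal)
qed


lemma sum_if_count:
  fixes c :: complex
  shows "(\<Sum>x\<in>(UNIV::'a::finite set). if P x then c else 0) = of_nat (card {x. P x}) * c"
proof -
  have "(\<Sum>x\<in>(UNIV::'a set). if P x then c else 0) = (\<Sum>x\<in>{x\<in>UNIV. P x}. c)"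
    by (rule sum.inter_filter[symmetric]) simp
  then show ?thesis by simp
qed

lemma sum_if_zero:
  fixes A B :: complex
  shows "(\<Sum>y\<in>(UNIV::'a::{finite,zero} set). if y = 0 then A else B) = A + (of_nat (card (UNIV::'a set)) - 1) * B"
proof -
  have "(\<Sum>y\<in>(UNIV::'a set). if y = 0 then A else B) = (\<Sum>y\<in>(UNIV::'a set). B + (if y = 0 then A - B else 0))"
    by (rule sum.cong) auto
  also have "\<dots> = of_nat (card (UNIV::'a set)) * B + (A - B)"
    by (simp add: sum.distrib)
  finally show ?thesis by (simp add: algebra_simps)
qed

lemma cube_expand: "((w::complex) - 1) ^ 3 = w ^ 3 - 3 * w ^ 2 + 3 * w - 1"
  by (simp add: power3_eq_cube power2_eq_square algebra_simps)

lemma final_alg: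
  fixes Q :: complex
  shows "Q^2 * Q^2 * (Q^2 + (Q^2 - 1) * Q) - Q^2 * (3 * (Q^2)^2 - 2 * Q^2) - ((Q^2 - 1)^3 + 1 - Q^2)
       = Q^2 * (Q^2 - 1) * (Q^3 - 3 * Q^2 + 2)"
  by (simp add: power3_eq_cube power2_eq_square algebra_simps)

theorem proposition11:
  fixes m :: nat
    and f :: "'a::{field,finite} \<Rightarrow> 'a"
  assumes "f = (\<lambda>x. x ^ (3 ^ m + 2))"
    and "m \<ge> 1"
    and "card (UNIV::'a set) = 3 ^ (2 * m)"
  shows "(\<Sum>a\<in>(UNIV::'a set). \<Sum>b\<in>(UNIV::'a set) - {0}.
            (walsh (2 * m) f a b - 1) ^ 3)
         = of_int ((3 ^ m) ^ 2 * ((3 ^ m) ^ 2 - 1) * ((3 ^ m) ^ 3 - 3 * (3 ^ m) ^ 2 + 2))"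
proof -
  define n where "n = 2 * m"
  have card: "card (UNIV::'a set) = 3 ^ n" using assms(3) n_def by simp
  have n1: "n \<ge> 1" using assms(2) n_def by simp
  have c3: "(3::'a) = 0" by (rule char3[OF card])
  let ?N = "of_nat (card (UNIV::'a set)) :: complex"
  define Q :: complex where "Q = 3 ^ m"
  have NQ: "?N = Q ^ 2" unfolding Q_def using assms(3) by (simp add: power_mult mult.commute)
  have f0: "f 0 = 0" using assms(1) by simp
  have fodd: "f (- x) = - f x" for x using assms(1) by (simp add: power_minus_odd)
  let ?W = "\<lambda>a b. walsh n f a b"
  have S1: "(\<Sum>a\<in>(UNIV::'a set). ?W a b) = ?N" for b by (rule sumW1[where n=n and f=f, OF card n1 f0])
  have S2: "(\<Sum>a\<in>(UNIV::'a set). ?W a b ^ 2) = ?N ^ 2" for b by (rule sumW2[where n=n and f=f, OF card n1 fodd])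
  have gz: "(f x + f y + f (- (x + y)) = 0) = (x ^ (3 ^ m) * y = x * y ^ (3 ^ m))" for x y
    unfolding assms(1) by (rule g_zero_iff[OF c3])
  have bc: "psi n (b * (f x + f y + f (- (x + y)))) = psi n ((f x + f y + f (- (x + y))) * b)" for b x y
    by (simp only: mult.commute)
  have S3: "(\<Sum>b\<in>(UNIV::'a set). \<Sum>a\<in>(UNIV::'a set). ?W a b ^ 3) = ?N * ?N * (?N + (?N - 1) * Q)"
  proof -
    have "(\<Sum>b\<in>(UNIV::'a set). \<Sum>a\<in>(UNIV::'a set). ?W a b ^ 3)
        = (\<Sum>b\<in>(UNIV::'a set). ?N * (\<Sum>x\<in>(UNIV::'a set). \<Sum>y\<in>UNIV. psi n (b * (f x + f y + f (- (x + y))))))"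
      by (simp only: sumW3[OF card n1])
    also have "\<dots> = ?N * (\<Sum>b\<in>(UNIV::'a set). \<Sum>x\<in>(UNIV::'a set). \<Sum>y\<in>UNIV. psi n ((f x + f y + f (- (x + y))) * b))"
      by (simp only: sum_distrib_left bc)
    also have "\<dots> = ?N * (\<Sum>x\<in>(UNIV::'a set). \<Sum>y\<in>UNIV. \<Sum>b\<in>(UNIV::'a set). psi n ((f x + f y + f (- (x + y))) * b))"
      by (rule arg_cong[of _ _ "\<lambda>t. ?N * t"]) (rule swap3)
    also have "\<dots> = ?N * (\<Sum>x\<in>(UNIV::'a set). \<Sum>y\<in>(UNIV::'a set). if x ^ (3 ^ m) * y = x * y ^ (3 ^ m) then ?N else 0)"
      by (simp only: char_sum[OF card n1] gz)
    also have "\<dots> = ?N * (\<Sum>y\<in>(UNIV::'a set). \<Sum>x\<in>(UNIV::'a set). if x ^ (3 ^ m) * y = x * y ^ (3 ^ m) then ?N else 0)"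
      by (rule arg_cong[of _ _ "\<lambda>t. ?N * t"]) (rule sum.swap)
    also have "\<dots> = ?N * (\<Sum>y\<in>(UNIV::'a set). of_nat (card {x::'a. x ^ (3 ^ m) * y = x * y ^ (3 ^ m)}) * ?N)"
      by (simp only: sum_if_count)
    also have "\<dots> = ?N * (\<Sum>y\<in>(UNIV::'a set). (if y = 0 then ?N else Q) * ?N)"
      by (intro arg_cong[of _ _ "\<lambda>t. ?N * t"] sum.cong refl) (simp add: row_card[OF assms(3,2)] Q_def)
    also have "\<dots> = ?N * ((\<Sum>y\<in>(UNIV::'a set). if y = 0 then ?N else Q) * ?N)"
      by (simp only: sum_distrib_right)
    also have "\<dots> = ?N * ?N * (?N + (?N - 1) * Q)"
      by (simp only: sum_if_zero) (simp add: algebra_simps)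
    finally show ?thesis .
  qed
  have row: "(\<Sum>a\<in>(UNIV::'a set). (?W a b - 1) ^ 3)
      = (\<Sum>a\<in>(UNIV::'a set). ?W a b ^ 3) - 3 * ?N ^ 2 + 3 * ?N - ?N" for b
  proof -
    have "(\<Sum>a\<in>(UNIV::'a set). (?W a b - 1) ^ 3)
        = (\<Sum>a\<in>(UNIV::'a set). ?W a b ^ 3) - 3 * (\<Sum>a\<in>(UNIV::'a set). ?W a b ^ 2)
          + 3 * (\<Sum>a\<in>(UNIV::'a set). ?W a b) - (\<Sum>a\<in>(UNIV::'a set). 1)"
      by (simp only: cube_expand sum_subtractf sum.distrib sum_distrib_left)
    then show ?thesis by (simp only: S1 S2) simp
  qed
  have W0s: "(\<Sum>a\<in>(UNIV::'a set). (?W a 0 - 1) ^ 3) = (?N - 1) ^ 3 + 1 - ?N"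
  proof -
    have "(\<Sum>a\<in>(UNIV::'a set). (?W a 0 - 1) ^ 3) = (\<Sum>a\<in>(UNIV::'a set). if a = 0 then (?N - 1) ^ 3 else -1)"
      by (rule sum.cong) (simp_all add: W0[OF card n1])
    also have "\<dots> = (?N - 1) ^ 3 + (?N - 1) * (-1)" by (rule sum_if_zero)
    finally show ?thesis by simp
  qed
  have "(\<Sum>a\<in>(UNIV::'a set). \<Sum>b\<in>(UNIV::'a set) - {0}. (?W a b - 1) ^ 3)
      = (\<Sum>b\<in>(UNIV::'a set) - {0}. \<Sum>a\<in>(UNIV::'a set). (?W a b - 1) ^ 3)"
    by (rule sum.swap)
  also have "\<dots> = (\<Sum>b\<in>(UNIV::'a set). \<Sum>a\<in>(UNIV::'a set). (?W a b - 1) ^ 3) - (\<Sum>a\<in>(UNIV::'a set). (?W a 0 - 1) ^ 3)"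
    by (simp add: sum_diff1)
  also have "\<dots> = (\<Sum>b\<in>(UNIV::'a set). (\<Sum>a\<in>(UNIV::'a set). ?W a b ^ 3) - 3 * ?N ^ 2 + 3 * ?N - ?N) - ((?N - 1) ^ 3 + 1 - ?N)"
    unfolding W0s by (simp only: row)
  also have "\<dots> = ?N * ?N * (?N + (?N - 1) * Q) - ?N * (3 * ?N ^ 2 - 2 * ?N) - ((?N - 1) ^ 3 + 1 - ?N)"
    by (simp add: sum_subtractf sum.distrib S3 algebra_simps)
  also have "\<dots> = Q^2 * (Q^2 - 1) * (Q^3 - 3 * Q^2 + 2)"
    unfolding NQ using final_alg[of Q] by simp
  also have "\<dots> = of_int ((3 ^ m) ^ 2 * ((3 ^ m) ^ 2 - 1) * ((3 ^ m) ^ 3 - 3 * (3 ^ m) ^ 2 + 2))"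
    unfolding Q_def by simp
  finally show ?thesis unfolding n_def .
qed

end
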